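(* Let $m\ge 2$. For $1\le l\le m$ let $M_l=\{[i,j]: i\ne j,\ i+j\equiv 2l-1 \pmod{2m}\}$. Each $M_l$ is an SPM of $CK(2m)$, the sets $M_1,\dots,M_m$ are pairwise disjoint, and every blocker $B$ in $CK(2m)$ satisfies $|B\cap M_l|=1$ for every $l=1,\dots,m$. In particular, a blocker contains no two distinct edges that are parallel (i.e., $[i,j],[i',j']$ with $i+j\equiv i'+j'\pmod{2m}$) when these have odd order.
   Context: $CK(2m)$ denotes the complete convex geometric graph whose vertices are the $2m$ vertices of a convex polygon, labelled cyclically $0,1,\dots,2m-1$ (labels modulo $2m$), and whose edges are all straight segments between pairs of vertices. Two edges with four distinct endpoints cross iff their endpoints alternate in the cyclic order. A simple perfect matching (SPM) is a set of $m$ edges that are pairwise disjoint (no common endpoint and no crossing). A blocking set is a set of edges containing at least one edge of every SPM. A blocker is a blocking set with exactly $m$ edges. The order of the edge $[i,i+k]$ ($0<k<2m$) is $\min(k,2m-k)$. *)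

theory Defs
  imports Main
begin

definition ck_edges :: "nat \<Rightarrow> nat set set" where
  "ck_edges m = {{i, j} | i j. i < 2*m \<and> j < 2*m \<and> i \<noteq> j}"

text \<open>Two edges with four distinct endpoints cross iff their endpoints alternate
  in the cyclic order (equivalently in the linear order of the labels).\<close>
definition crosses :: "nat set \<Rightarrow> nat set \<Rightarrow> bool" where
  "crosses e f \<longleftrightarrow> (\<exists>a b c d. ((e = {a, c} \<and> f = {b, d}) \<or> (e = {b, d} \<and> f = {a, c}))
                          \<and> a < b \<and> b < c \<and> c < d)"

definition is_SPM :: "nat \<Rightarrow> nat set set \<Rightarrow> bool" where
  "is_SPM m S \<longleftrightarrow> S \<subseteq> ck_edges m \<and> card S = m \<and>
     (\<forall>e\<in>S. \<forall>f\<in>S. e \<noteq> f \<longrightarrow> e \<inter> f = {} \<and> \<not> crosses e f)"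

definition is_blocking_set :: "nat \<Rightarrow> nat set set \<Rightarrow> bool" where
  "is_blocking_set m B \<longleftrightarrow> B \<subseteq> ck_edges m \<and> (\<forall>S. is_SPM m S \<longrightarrow> B \<inter> S \<noteq> {})"

definition is_blocker :: "nat \<Rightarrow> nat set set \<Rightarrow> bool" where
  "is_blocker m B \<longleftrightarrow> is_blocking_set m B \<and> card B = m"

definition edge_order :: "nat \<Rightarrow> nat set \<Rightarrow> nat" where
  "edge_order m e = min (Max e - Min e) (2*m - (Max e - Min e))"

definition M_class :: "nat \<Rightarrow> nat \<Rightarrow> nat set set" where
  "M_class m l = {{i, j} | i j. i < 2*m \<and> j < 2*m \<and> i \<noteq> j \<and>
                             (i + j) mod (2*m) = (2*l - 1) mod (2*m)}"

definition parallel :: "nat \<Rightarrow> nat set \<Rightarrow> nat set \<Rightarrow> bool" where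
  "parallel m e f \<longleftrightarrow> (\<Sum>e) mod (2*m) = (\<Sum>f) mod (2*m)"

end

theory Submission imports Defs begin

definition Ms :: "nat \<Rightarrow> nat \<Rightarrow> nat set set" where
  "Ms m s = {{i, j} | i j. i < 2*m \<and> j < 2*m \<and> (i + j = s \<or> i + j = s + 2*m)}"

lemma mod_char:
  fixes x s m :: nat
  assumes "s < 2*m" "x < 4*m"
  shows "(x mod (2*m) = s) = (x = s \<or> x = s + 2*m)"
proof (cases "x < 2*m")
  case True then show ?thesis using assms by auto
next
  case False
  then have "x mod (2*m) = (x - 2*m) mod (2*m)" by (simp add: le_mod_geq)
  also have "\<dots> = x - 2*m" using assms False by simp
  finally show ?thesis using False assms by auto
qed

lemma M_eq:
  assumes "1 \<le> l" "l \<le> m"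
  shows "M_class m l = Ms m (2*l-1)"
proof -
  have s: "(2*l-1) mod (2*m) = 2*l-1" "2*l-1 < 2*m" "odd (2*l-1)" using assms by auto
  have key: "\<And>i j. i < 2*m \<Longrightarrow> j < 2*m \<Longrightarrow> (i \<noteq> j \<and> (i + j) mod (2*m) = (2*l-1) mod (2*m))
      = (i + j = 2*l-1 \<or> i + j = 2*l-1 + 2*m)"
  proof -
    fix i j :: nat assume ij: "i < 2*m" "j < 2*m"
    have "((i + j) mod (2*m) = (2*l-1)) = (i + j = 2*l-1 \<or> i + j = 2*l-1 + 2*m)"
      using mod_char[OF s(2), of "i+j"] ij by simp
    moreover have "i + j = 2*l-1 \<or> i + j = 2*l-1 + 2*m \<Longrightarrow> i \<noteq> j" using s(3) by presburger
    ultimately show "(i \<noteq> j \<and> (i + j) mod (2*m) = (2*l-1) mod (2*m))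
      = (i + j = 2*l-1 \<or> i + j = 2*l-1 + 2*m)" using s(1) by auto
  qed
  show ?thesis
  proof (intro set_eqI iffI)
    fix x assume "x \<in> M_class m l"
    then obtain i j where ij: "x = {i,j}" "i < 2*m" "j < 2*m" "i \<noteq> j"
      "(i + j) mod (2*m) = (2*l-1) mod (2*m)" unfolding M_class_def by blast
    then have "i + j = 2*l-1 \<or> i + j = 2*l-1 + 2*m" using key[OF ij(2,3)] by blast
    then show "x \<in> Ms m (2*l-1)" unfolding Ms_def using ij(1-3) by blast
  next
    fix x assume "x \<in> Ms m (2*l-1)"
    then obtain i j where ij: "x = {i,j}" "i < 2*m" "j < 2*m"
      "i + j = 2*l-1 \<or> i + j = 2*l-1 + 2*m" unfolding Ms_def by blast
    then have "i \<noteq> j \<and> (i + j) mod (2*m) = (2*l-1) mod (2*m)" using key[OF ij(2,3)] by blast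
    then show "x \<in> M_class m l" unfolding M_class_def using ij(1-3) by blast
  qed
qed

lemma partner:
  assumes "e \<in> Ms m s" "x \<in> e"
  shows "\<exists>y. e = {x,y} \<and> y < 2*m \<and> (x + y = s \<or> x + y = s + 2*m)"
proof -
  obtain i j where ij: "e = {i,j}" "i < 2*m" "j < 2*m" "i + j = s \<or> i + j = s + 2*m"
    using assms(1) unfolding Ms_def by blast
  show ?thesis
  proof (cases "x = i")
    case True then show ?thesis using ij by blast
  next
    case False
    then have "x = j" using ij assms(2) by blast
    then show ?thesis using ij by (auto simp: insert_commute add.commute)
  qed
qed

lemma Ms_disj:
  assumes "e \<in> Ms m s" "f \<in> Ms m s" "e \<noteq> f" "s < 2*m"
  shows "e \<inter> f = {}"
proof (rule ccontr)
  assume "e \<inter> f \<noteq> {}"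
  then obtain x where x: "x \<in> e" "x \<in> f" by blast
  obtain y where y: "e = {x,y}" "y < 2*m" "x + y = s \<or> x + y = s + 2*m"
    using partner[OF assms(1) x(1)] by blast
  obtain y' where y': "f = {x,y'}" "y' < 2*m" "x + y' = s \<or> x + y' = s + 2*m"
    using partner[OF assms(2) x(2)] by blast
  have "y = y'" using y y' by linarith
  then show False using y y' assms(3) by simp
qed

lemma Ms_nocross:
  assumes "e \<in> Ms m s" "f \<in> Ms m s" "s < 2*m"
  shows "\<not> crosses e f"
proof
  assume "crosses e f"
  then obtain a b c d where abcd: "(e = {a, c} \<and> f = {b, d}) \<or> (e = {b, d} \<and> f = {a, c})"
    "a < b" "b < c" "c < d" unfolding crosses_def by blast
  have "{a,c} \<in> Ms m s" "{b,d} \<in> Ms m s" using abcd(1) assms by auto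
  then obtain i j i' j' where "{a,c} = {i,j}" "i < 2*m" "j < 2*m" "i + j = s \<or> i + j = s + 2*m"
    "{b,d} = {i',j'}" "i' < 2*m" "j' < 2*m" "i' + j' = s \<or> i' + j' = s + 2*m"
    unfolding Ms_def by blast
  then have h: "a + c = s \<or> a + c = s + 2*m" "b + d = s \<or> b + d = s + 2*m" "d < 2*m"
    by (auto simp: doubleton_eq_iff)
  show False using h abcd(2-4) assms(3) by linarith
qed

lemma Ms_fin: "finite (Ms m s)"
proof -
  have "Ms m s \<subseteq> Pow {..<2*m}" unfolding Ms_def by auto
  then show ?thesis by (rule finite_subset) simp
qed

lemma Ms_card:
  assumes "s < 2*m" "odd s"
  shows "card (Ms m s) = m"
proof -
  have c2: "\<And>e. e \<in> Ms m s \<Longrightarrow> card e = 2"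
  proof -
    fix e assume "e \<in> Ms m s"
    then obtain i j where "e = {i,j}" "i + j = s \<or> i + j = s + 2*m" unfolding Ms_def by blast
    moreover have "i \<noteq> j" using calculation(2) assms(2) by presburger
    ultimately show "card e = 2" by simp
  qed
  have U: "\<Union>(Ms m s) = {..<2*m}"
  proof
    show "\<Union>(Ms m s) \<subseteq> {..<2*m}" unfolding Ms_def by auto
  next
    show "{..<2*m} \<subseteq> \<Union>(Ms m s)"
    proof
      fix i assume i: "i \<in> {..<2*m}"
      show "i \<in> \<Union>(Ms m s)"
      proof (cases "i \<le> s")
        case True
        then have "{i, s - i} \<in> Ms m s" using i assms(1) unfolding Ms_def
          by (intro CollectI exI[of _ i] exI[of _ "s - i"]) auto
        then show ?thesis by blast
      next
        case False
        then have "{i, s + 2*m - i} \<in> Ms m s" using i assms(1) unfolding Ms_def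
          by (intro CollectI exI[of _ i] exI[of _ "s + 2*m - i"]) auto
        then show ?thesis by blast
      qed
    qed
  qed
  have pw: "pairwise disjnt (Ms m s)"
    unfolding pairwise_def disjnt_def using Ms_disj assms(1) by blast
  have fin: "\<And>A. A \<in> Ms m s \<Longrightarrow> finite A" unfolding Ms_def by auto
  have "2*m = card (\<Union>(Ms m s))" using U by simp
  also have "\<dots> = sum card (Ms m s)" by (rule card_Union_disjoint[OF pw fin])
  also have "\<dots> = sum (\<lambda>_. 2) (Ms m s)" using c2 by simp
  also have "\<dots> = 2 * card (Ms m s)" by simp
  finally show ?thesis by simp
qed

lemma Ms_SPM:
  assumes "s < 2*m" "odd s"
  shows "is_SPM m (Ms m s)"
proof -
  have "Ms m s \<subseteq> ck_edges m"
  proof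
    fix e assume "e \<in> Ms m s"
    then obtain i j where "e = {i,j}" "i < 2*m" "j < 2*m" "i + j = s \<or> i + j = s + 2*m" unfolding Ms_def by blast
    moreover have "i \<noteq> j" using calculation(4) assms(2) by presburger
    ultimately show "e \<in> ck_edges m" unfolding ck_edges_def by blast
  qed
  moreover have "\<forall>e\<in>Ms m s. \<forall>f\<in>Ms m s. e \<noteq> f \<longrightarrow> e \<inter> f = {} \<and> \<not> crosses e f"
    using Ms_disj Ms_nocross assms(1) by (intro ballI impI conjI) auto
  ultimately show ?thesis unfolding is_SPM_def using Ms_card[OF assms] by simp
qed


lemma sum_M:
  assumes "e \<in> M_class m l" "1 \<le> l" "l \<le> m"
  shows "(\<Sum>e) mod (2*m) = 2*l - 1"
proof -
  obtain i j where ij: "e = {i,j}" "i \<noteq> j" "(i + j) mod (2*m) = (2*l-1) mod (2*m)"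
    using assms(1) unfolding M_class_def by blast
  have "\<Sum>e = i + j" using ij by simp
  moreover have "(2*l-1) mod (2*m) = 2*l-1" using assms by simp
  ultimately show ?thesis using ij by simp
qed

lemma edge_odd:
  assumes "e \<in> ck_edges m" "odd (edge_order m e)"
  shows "odd (\<Sum>e)"
proof -
  obtain i j where ij: "e = {i,j}" "i < 2*m" "j < 2*m" "i \<noteq> j"
    using assms(1) unfolding ck_edges_def by blast
  define k where "k = Max e - Min e"
  have k: "k = (if i < j then j - i else i - j)" using ij unfolding k_def by auto
  have "k < 2*m" using k ij by auto
  have "odd (min k (2*m - k))" using assms(2) unfolding edge_order_def k_def by simp
  then have "odd k"
  proof (cases "k \<le> 2*m - k")
    case True then show ?thesis using \<open>odd (min k (2*m - k))\<close> by (simp add: min_def)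
  next
    case False
    then have "odd (2*m - k)" using \<open>odd (min k (2*m - k))\<close> by (simp add: min_def)
    then show ?thesis using \<open>k < 2*m\<close> by presburger
  qed
  then have "odd (i + j)"
  proof (cases "i < j")
    case True then have "k = j - i" using k by simp
    then show ?thesis using \<open>odd k\<close> True by presburger
  next
    case False then have "k = i - j" using k by simp
    then show ?thesis using \<open>odd k\<close> False by presburger
  qed
  then show ?thesis using ij by simp
qed

lemma in_M:
  assumes "e \<in> ck_edges m" "odd (\<Sum>e)"
  defines "l \<equiv> ((\<Sum>e) mod (2*m) + 1) div 2"
  shows "e \<in> M_class m l" "l \<in> {1..m}"
proof -
  obtain i j where ij: "e = {i,j}" "i < 2*m" "j < 2*m" "i \<noteq> j"
    using assms(1) unfolding ck_edges_def by blast
  have sm: "\<Sum>e = i + j" using ij by simp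
  have mpos: "m > 0" using ij by simp
  define r where "r = (i + j) mod (2*m)"
  have "r < 2*m" unfolding r_def using mpos by simp
  have "odd r"
  proof -
    have "r mod 2 = (i + j) mod 2" unfolding r_def by (simp add: mod_mod_cancel)
    then show ?thesis using assms(2) sm by presburger
  qed
  have lr: "l = (r + 1) div 2" unfolding l_def r_def sm ..
  have "2*l - 1 = r" using \<open>odd r\<close> lr by presburger
  then have "(2*l-1) mod (2*m) = r" using \<open>r < 2*m\<close> by simp
  then show "e \<in> M_class m l" unfolding M_class_def using ij r_def
    by (intro CollectI exI[of _ i] exI[of _ j]) simp
  have "1 \<le> l" "l \<le> m" using \<open>odd r\<close> \<open>r < 2*m\<close> lr by presburger+
  then show "l \<in> {1..m}" by simp
qed

theorem mainTheorem4:
  fixes m :: nat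
  assumes "m \<ge> 2"
  shows "(\<forall>l\<in>{1..m}. is_SPM m (M_class m l))
       \<and> (\<forall>l\<in>{1..m}. \<forall>l'\<in>{1..m}. l \<noteq> l' \<longrightarrow> M_class m l \<inter> M_class m l' = {})
       \<and> (\<forall>B. is_blocker m B \<longrightarrow> (\<forall>l\<in>{1..m}. card (B \<inter> M_class m l) = 1))
       \<and> (\<forall>B. is_blocker m B \<longrightarrow>
            \<not> (\<exists>e\<in>B. \<exists>f\<in>B. e \<noteq> f \<and> parallel m e f \<and> odd (edge_order m e) \<and> odd (edge_order m f)))"
proof -
  have P1: "\<forall>l\<in>{1..m}. is_SPM m (M_class m l)"
  proof
    fix l assume l: "l \<in> {1..m}"
    have "2*l-1 < 2*m" "odd (2*l-1)" using l by auto
    then show "is_SPM m (M_class m l)" using M_eq[of l m] l Ms_SPM by auto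
  qed
  have P2: "\<forall>l\<in>{1..m}. \<forall>l'\<in>{1..m}. l \<noteq> l' \<longrightarrow> M_class m l \<inter> M_class m l' = {}"
  proof (intro ballI impI)
    fix l l' assume l: "l \<in> {1..m}" "l' \<in> {1..m}" "l \<noteq> l'"
    show "M_class m l \<inter> M_class m l' = {}"
    proof (rule ccontr)
      assume "M_class m l \<inter> M_class m l' \<noteq> {}"
      then obtain e where "e \<in> M_class m l" "e \<in> M_class m l'" by blast
      then have "2*l - 1 = 2*l' - 1" using sum_M l by (metis atLeastAtMost_iff)
      then show False using l by auto
    qed
  qed
  have P3: "\<forall>B. is_blocker m B \<longrightarrow> (\<forall>l\<in>{1..m}. card (B \<inter> M_class m l) = 1)"
  proof (intro allI impI)
    fix B assume B: "is_blocker m B"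
    then have cB: "card B = m" and blk: "\<And>S. is_SPM m S \<Longrightarrow> B \<inter> S \<noteq> {}"
      unfolding is_blocker_def is_blocking_set_def by auto
    have finB: "finite B" using cB assms by (metis card.infinite not_numeral_le_zero)
    let ?A = "\<lambda>l. B \<inter> M_class m l"
    have ne: "\<And>l. l \<in> {1..m} \<Longrightarrow> card (?A l) \<ge> 1"
    proof -
      fix l assume "l \<in> {1..m}"
      then have "?A l \<noteq> {}" using blk P1 by blast
      moreover have "finite (?A l)" using finB by simp
      ultimately show "card (?A l) \<ge> 1" by (simp add: Suc_leI card_gt_0_iff)
    qed
    have "(\<Sum>l\<in>{1..m}. card (?A l)) = card (\<Union>(?A ` {1..m}))"
      using P2 finB by (intro card_UN_disjoint[symmetric]) auto
    also have "\<dots> \<le> card B" using finB by (intro card_mono) auto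
    finally have sle: "(\<Sum>l\<in>{1..m}. card (?A l)) \<le> m" using cB by simp
    show "\<forall>l\<in>{1..m}. card (?A l) = 1"
    proof (rule ccontr)
      assume "\<not> (\<forall>l\<in>{1..m}. card (?A l) = 1)"
      then obtain l0 where l0: "l0 \<in> {1..m}" "card (?A l0) \<noteq> 1" by blast
      then have c2: "card (?A l0) \<ge> 2" using ne by fastforce
      have "(\<Sum>l\<in>{1..m}. card (?A l)) = card (?A l0) + (\<Sum>l\<in>{1..m}-{l0}. card (?A l))"
        using l0 by (intro sum.remove) auto
      moreover have "(\<Sum>l\<in>{1..m}-{l0}. card (?A l)) \<ge> (\<Sum>l\<in>{1..m}-{l0}. 1)"
        using ne by (intro sum_mono) auto
      moreover have "(\<Sum>l\<in>{1..m}-{l0}. (1::nat)) = m - 1" using l0 by simp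
      ultimately show False using c2 sle l0 by linarith
    qed
  qed
  have P4: "\<forall>B. is_blocker m B \<longrightarrow>
            \<not> (\<exists>e\<in>B. \<exists>f\<in>B. e \<noteq> f \<and> parallel m e f \<and> odd (edge_order m e) \<and> odd (edge_order m f))"
  proof (intro allI impI notI)
    fix B assume B: "is_blocker m B"
      and "\<exists>e\<in>B. \<exists>f\<in>B. e \<noteq> f \<and> parallel m e f \<and> odd (edge_order m e) \<and> odd (edge_order m f)"
    then obtain e f where ef: "e \<in> B" "f \<in> B" "e \<noteq> f" "parallel m e f"
      "odd (edge_order m e)" "odd (edge_order m f)" by blast
    have sub: "B \<subseteq> ck_edges m" using B unfolding is_blocker_def is_blocking_set_def by auto
    have finB: "finite B" using B assms unfolding is_blocker_def
      by (metis card.infinite not_numeral_le_zero)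
    have oe: "odd (\<Sum>e)" "odd (\<Sum>f)" using edge_odd sub ef by auto
    define l where "l = ((\<Sum>e) mod (2*m) + 1) div 2"
    have "l = ((\<Sum>f) mod (2*m) + 1) div 2" using ef(4) unfolding l_def parallel_def by simp
    then have "e \<in> M_class m l" "f \<in> M_class m l" "l \<in> {1..m}"
      using in_M[of e m] in_M[of f m] sub ef oe unfolding l_def by auto
    then have "{e,f} \<subseteq> B \<inter> M_class m l" using ef by auto
    then have "card {e,f} \<le> card (B \<inter> M_class m l)" using finB by (intro card_mono) auto
    moreover have "card (B \<inter> M_class m l) = 1" using P3 B \<open>l \<in> {1..m}\<close> by blast
    ultimately show False using ef(3) by simp
  qed
  show ?thesis using P1 P2 P3 P4 by blast
qed

end
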